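(* Let $T$ be the monad on $\mathsf{Set}$ associated to a Mal'cev algebraic theory (so that $T$-algebras are the models of the theory). Then every $T$-algebra $(A,e)$ is indiscrete, and the partial evaluation relation on $TA$ is an equivalence relation.
   Context: A Mal'cev operation on a set $A$ is a ternary operation $m$ with $m(a,b,b)=a$ and $m(a,a,b)=b$ for all $a,b\in A$; a Mal'cev theory is an algebraic (Lawvere/equational) theory containing a ternary operation satisfying these identities. A $T$-algebra $(A,e)$ is indiscrete if for all $t_0,t_1\in TA$ with $e(t_0)=e(t_1)$ there is $\tau\in TTA$ with $\mu_A(\tau)=t_0$ and $(Te)(\tau)=t_1$ (i.e. the algebra square formed by $\mu_A,Te,e,e$ is a weak pullback). The partial evaluation relation on $TA$ consists of the pairs $(\mu_A(\tau),(Te)(\tau))$ for $\tau\in TTA$. *)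

theory Defs
  imports Main "HOL-Library.FuncSet"
begin

datatype ('f, 'v) trm = Var 'v | Fn 'f "('f, 'v) trm list"

fun wf_trm :: "('f \<Rightarrow> nat) \<Rightarrow> 'v set \<Rightarrow> ('f, 'v) trm \<Rightarrow> bool" where
  "wf_trm ar V (Var v) = (v \<in> V)"
| "wf_trm ar V (Fn f ts) = (length ts = ar f \<and> (\<forall>t\<in>set ts. wf_trm ar V t))"

primrec tsubst :: "('v \<Rightarrow> ('f, 'w) trm) \<Rightarrow> ('f, 'v) trm \<Rightarrow> ('f, 'w) trm" where
  "tsubst \<sigma> (Var v) = \<sigma> v"
| "tsubst \<sigma> (Fn f ts) = Fn f (map (tsubst \<sigma>) ts)"

definition tmap :: "('v \<Rightarrow> 'w) \<Rightarrow> ('f, 'v) trm \<Rightarrow> ('f, 'w) trm" where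
  "tmap g = tsubst (Var \<circ> g)"

definition eq_theory :: "('f \<Rightarrow> nat) \<Rightarrow> (('f, nat) trm \<times> ('f, nat) trm) set \<Rightarrow> bool" where
  "eq_theory ar E \<longleftrightarrow> (\<forall>(l, r)\<in>E. wf_trm ar UNIV l \<and> wf_trm ar UNIV r)"

inductive eqv :: "('f \<Rightarrow> nat) \<Rightarrow> (('f, nat) trm \<times> ('f, nat) trm) set \<Rightarrow> 'v set
                   \<Rightarrow> ('f, 'v) trm \<Rightarrow> ('f, 'v) trm \<Rightarrow> bool"
  for ar E V where
  refl: "wf_trm ar V t \<Longrightarrow> eqv ar E V t t"
| sym: "eqv ar E V s t \<Longrightarrow> eqv ar E V t s"
| trans: "eqv ar E V s t \<Longrightarrow> eqv ar E V t u \<Longrightarrow> eqv ar E V s u"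
| cong: "length ss = ar f \<Longrightarrow> list_all2 (eqv ar E V) ss ts \<Longrightarrow> eqv ar E V (Fn f ss) (Fn f ts)"
| ax: "(l, r) \<in> E \<Longrightarrow> (\<forall>i. wf_trm ar V (\<sigma> i)) \<Longrightarrow> eqv ar E V (tsubst \<sigma> l) (tsubst \<sigma> r)"

text \<open>The theory is Mal'cev: some ternary derived operation p satisfies
  p(x,y,y) = x and p(x,x,y) = y (variables x = 0, y = 1, p in variables 0,1,2).\<close>
definition malcev_theory :: "('f \<Rightarrow> nat) \<Rightarrow> (('f, nat) trm \<times> ('f, nat) trm) set \<Rightarrow> bool" where
  "malcev_theory ar E \<longleftrightarrow>
     (\<exists>p :: ('f, nat) trm. wf_trm ar {0, 1, 2} p
        \<and> eqv ar E UNIV (tsubst (\<lambda>i. [Var 0, Var 1, Var 1] ! i :: ('f, nat) trm) p) (Var 0)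
        \<and> eqv ar E UNIV (tsubst (\<lambda>i. [Var 0, Var 0, Var 1] ! i :: ('f, nat) trm) p) (Var 1))"

text \<open>TA: the free algebra on the set A, i.e. derivable-equality classes of
  well-formed terms over A.\<close>
definition cls :: "('f \<Rightarrow> nat) \<Rightarrow> (('f, nat) trm \<times> ('f, nat) trm) set \<Rightarrow> 'v set
                   \<Rightarrow> ('f, 'v) trm \<Rightarrow> ('f, 'v) trm set" where
  "cls ar E A t = {s. eqv ar E A t s}"

definition TT :: "('f \<Rightarrow> nat) \<Rightarrow> (('f, nat) trm \<times> ('f, nat) trm) set \<Rightarrow> 'v set
                  \<Rightarrow> ('f, 'v) trm set set" where
  "TT ar E A = {cls ar E A t | t. wf_trm ar A t}"

definition eta :: "('f \<Rightarrow> nat) \<Rightarrow> (('f, nat) trm \<times> ('f, nat) trm) set \<Rightarrow> 'v set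
                   \<Rightarrow> 'v \<Rightarrow> ('f, 'v) trm set" where
  "eta ar E A a = cls ar E A (Var a)"

definition Tmap :: "('f \<Rightarrow> nat) \<Rightarrow> (('f, nat) trm \<times> ('f, nat) trm) set \<Rightarrow> 'w set
                    \<Rightarrow> ('v \<Rightarrow> 'w) \<Rightarrow> ('f, 'v) trm set \<Rightarrow> ('f, 'w) trm set" where
  "Tmap ar E B g X = cls ar E B (tmap g (SOME s. s \<in> X))"

definition mu :: "('f \<Rightarrow> nat) \<Rightarrow> (('f, nat) trm \<times> ('f, nat) trm) set \<Rightarrow> 'v set
                  \<Rightarrow> ('f, ('f, 'v) trm set) trm set \<Rightarrow> ('f, 'v) trm set" where
  "mu ar E A X = cls ar E A (tsubst (\<lambda>c. SOME t. t \<in> c) (SOME s. s \<in> X))"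

definition T_algebra :: "('f \<Rightarrow> nat) \<Rightarrow> (('f, nat) trm \<times> ('f, nat) trm) set \<Rightarrow> 'v set
                         \<Rightarrow> (('f, 'v) trm set \<Rightarrow> 'v) \<Rightarrow> bool" where
  "T_algebra ar E A e \<longleftrightarrow>
     e \<in> TT ar E A \<rightarrow> A
     \<and> (\<forall>a\<in>A. e (eta ar E A a) = a)
     \<and> (\<forall>X\<in>TT ar E (TT ar E A). e (mu ar E A X) = e (Tmap ar E A e X))"

definition indiscrete :: "('f \<Rightarrow> nat) \<Rightarrow> (('f, nat) trm \<times> ('f, nat) trm) set \<Rightarrow> 'v set
                          \<Rightarrow> (('f, 'v) trm set \<Rightarrow> 'v) \<Rightarrow> bool" where
  "indiscrete ar E A e \<longleftrightarrow>
     (\<forall>t0\<in>TT ar E A. \<forall>t1\<in>TT ar E A. e t0 = e t1 \<longrightarrow>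
        (\<exists>\<tau>\<in>TT ar E (TT ar E A). mu ar E A \<tau> = t0 \<and> Tmap ar E A e \<tau> = t1))"

definition partial_eval :: "('f \<Rightarrow> nat) \<Rightarrow> (('f, nat) trm \<times> ('f, nat) trm) set \<Rightarrow> 'v set
                            \<Rightarrow> (('f, 'v) trm set \<Rightarrow> 'v) \<Rightarrow> (('f, 'v) trm set \<times> ('f, 'v) trm set) set" where
  "partial_eval ar E A e = {(mu ar E A \<tau>, Tmap ar E A e \<tau>) | \<tau>. \<tau> \<in> TT ar E (TT ar E A)}"

end

theory Submission
  imports Defs
begin

lemma wf_tsubst:
  "wf_trm ar V s \<Longrightarrow> (\<forall>v\<in>V. wf_trm ar W (\<sigma> v)) \<Longrightarrow> wf_trm ar W (tsubst \<sigma> s)"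
  by (induction s) auto

lemma tsubst_cong:
  "wf_trm ar V s \<Longrightarrow> (\<forall>v\<in>V. \<sigma> v = \<sigma>' v) \<Longrightarrow> tsubst \<sigma> s = tsubst \<sigma>' s"
  by (induction s) auto

lemma tsubst_tsubst: "tsubst \<sigma> (tsubst \<tau> s) = tsubst (tsubst \<sigma> \<circ> \<tau>) s"
  by (induction s) auto

lemma tsubst_Var: "tsubst Var s = s"
  by (induction s) (auto intro: map_idI)

lemma eqv_wf:
  assumes "eq_theory ar E"
  shows "eqv ar E V s t \<Longrightarrow> wf_trm ar V s \<and> wf_trm ar V t"
proof (induction rule: eqv.induct)
  case (cong ss f ts)
  then show ?case
    by (auto simp: list_all2_conv_all_nth in_set_conv_nth)
next
  case (ax l r \<sigma>)
  then show ?case using assms unfolding eq_theory_def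
    by (auto intro!: wf_tsubst[where V=UNIV])
qed auto

lemma eqv_subst:
  "eqv ar E V s t \<Longrightarrow> (\<forall>v\<in>V. wf_trm ar W (\<sigma> v)) \<Longrightarrow> eqv ar E W (tsubst \<sigma> s) (tsubst \<sigma> t)"
proof (induction rule: eqv.induct)
  case (refl t)
  then show ?case by (auto intro!: eqv.refl wf_tsubst)
next
  case (sym s t)
  then show ?case by (auto intro: eqv.sym)
next
  case (trans s t u)
  then show ?case by (auto intro: eqv.trans)
next
  case (cong ss f ts)
  then show ?case
    by (auto intro!: eqv.cong simp: list_all2_conv_all_nth)
next
  case (ax l r \<tau>)
  have "eqv ar E W (tsubst (tsubst \<sigma> \<circ> \<tau>) l) (tsubst (tsubst \<sigma> \<circ> \<tau>) r)"
    using ax by (intro eqv.ax) (auto intro: wf_tsubst)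
  then show ?case by (simp add: tsubst_tsubst)
qed

lemma eqv_cong_subst:
  "wf_trm ar V s \<Longrightarrow> (\<forall>v\<in>V. eqv ar E W (\<sigma> v) (\<sigma>' v)) \<Longrightarrow>
   eqv ar E W (tsubst \<sigma> s) (tsubst \<sigma>' s)"
proof (induction s)
  case (Var x)
  then show ?case by simp
next
  case (Fn f ts)
  then show ?case
    by (auto intro!: eqv.cong simp: list_all2_conv_all_nth)
qed

lemma cls_eq: "eqv ar E V s t \<Longrightarrow> cls ar E V s = cls ar E V t"
  unfolding cls_def by (auto intro: eqv.sym eqv.trans)

lemma ch_cls: "wf_trm ar A r \<Longrightarrow> eqv ar E A r (SOME t. t \<in> cls ar E A r)"
proof -
  assume "wf_trm ar A r"
  then have "r \<in> cls ar E A r" unfolding cls_def by (auto intro: eqv.refl)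
  then have "(SOME t. t \<in> cls ar E A r) \<in> cls ar E A r" by (rule someI)
  then show ?thesis unfolding cls_def by simp
qed

lemma cls_TT: "wf_trm ar A r \<Longrightarrow> cls ar E A r \<in> TT ar E A"
  unfolding TT_def by blast

lemma ch_wf:
  assumes "eq_theory ar E" "c \<in> TT ar E A"
  shows "wf_trm ar A (SOME t. t \<in> c)"
proof -
  obtain r where r: "wf_trm ar A r" "c = cls ar E A r" using assms(2) unfolding TT_def by blast
  show ?thesis using ch_cls[OF r(1), of E] eqv_wf[OF assms(1)] r(2) by blast
qed

lemma mu_cls:
  assumes "eq_theory ar E" "wf_trm ar (TT ar E A) s"
  shows "mu ar E A (cls ar E (TT ar E A) s) = cls ar E A (tsubst (\<lambda>c. SOME t. t \<in> c) s)"
proof -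
  let ?s' = "SOME s'. s' \<in> cls ar E (TT ar E A) s"
  have e: "eqv ar E (TT ar E A) s ?s'" by (rule ch_cls[OF assms(2)])
  have "eqv ar E A (tsubst (\<lambda>c. SOME t. t \<in> c) s) (tsubst (\<lambda>c. SOME t. t \<in> c) ?s')"
    using eqv_subst[OF e, of A "\<lambda>c. SOME t. t \<in> c"] ch_wf[OF assms(1)] by blast
  then show ?thesis unfolding mu_def by (simp add: cls_eq)
qed

lemma Tmap_cls:
  assumes "wf_trm ar V s" "\<forall>v\<in>V. g v \<in> B"
  shows "Tmap ar E B g (cls ar E V s) = cls ar E B (tmap g s)"
proof -
  let ?s' = "SOME s'. s' \<in> cls ar E V s"
  have e: "eqv ar E V s ?s'" by (rule ch_cls[OF assms(1)])
  have "eqv ar E B (tmap g s) (tmap g ?s')"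
    unfolding tmap_def using eqv_subst[OF e, of B "Var \<circ> g"] assms(2) by simp
  then show ?thesis unfolding Tmap_def by (simp add: cls_eq)
qed

lemma malcev_inst:
  assumes "eqv ar E UNIV (tsubst (\<lambda>i. m ! i) p) (Var k)"
    and "wf_trm ar {0,1,2} p" and "\<forall>i. wf_trm ar A (\<rho> i)"
    and "\<forall>v\<in>{0,1,2}. tsubst \<rho> (m ! v) = \<delta> v"
  shows "eqv ar E A (tsubst \<delta> p) (\<rho> k)"
proof -
  have "eqv ar E A (tsubst \<rho> (tsubst (\<lambda>i. m ! i) p)) (tsubst \<rho> (Var k))"
    using eqv_subst[OF assms(1)] assms(3) by blast
  moreover have "tsubst \<rho> (tsubst (\<lambda>i. m ! i) p) = tsubst \<delta> p"
    unfolding tsubst_tsubst using tsubst_cong[OF assms(2), of "tsubst \<rho> \<circ> (\<lambda>i. m ! i)" \<delta>] assms(4) by simp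
  ultimately show ?thesis by simp
qed

lemma indisc:
  fixes ar :: "'f \<Rightarrow> nat" and E :: "(('f, nat) trm \<times> ('f, nat) trm) set"
    and A :: "'a set" and e :: "('f, 'a) trm set \<Rightarrow> 'a"
  assumes th: "eq_theory ar E"
    and mal: "malcev_theory ar E"
    and alg: "T_algebra ar E A e"
  shows "indiscrete ar E A e"
  unfolding indiscrete_def
proof (intro ballI impI)
  fix t0 t1 assume t0: "t0 \<in> TT ar E A" and t1: "t1 \<in> TT ar E A" and et: "e t0 = e t1"
  have eA: "e \<in> TT ar E A \<rightarrow> A" and eeta: "\<forall>a\<in>A. e (eta ar E A a) = a"
    using alg unfolding T_algebra_def by auto
  obtain r0 where r0: "wf_trm ar A r0" "t0 = cls ar E A r0" using t0 unfolding TT_def by blast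
  obtain r1 where r1: "wf_trm ar A r1" "t1 = cls ar E A r1" using t1 unfolding TT_def by blast
  obtain p :: "('f, nat) trm" where p: "wf_trm ar {0, 1, 2} p"
    and m1: "eqv ar E UNIV (tsubst (\<lambda>i. [Var 0, Var 1, Var 1] ! i :: ('f, nat) trm) p) (Var 0)"
    and m2: "eqv ar E UNIV (tsubst (\<lambda>i. [Var 0, Var 0, Var 1] ! i :: ('f, nat) trm) p) (Var 1)"
    using mal unfolding malcev_theory_def by blast
  define a where "a = e t0"
  have aA: "a \<in> A" using eA t0 unfolding a_def by blast
  define ch :: "('f, 'a) trm set \<Rightarrow> ('f, 'a) trm" where "ch = (\<lambda>c. SOME t. t \<in> c)"
  define \<sigma> where "\<sigma> = (\<lambda>i::nat. if i = 0 then Var t0 else if i = 1 then Var t1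
                       else tmap (eta ar E A) r1)"
  define s where "s = tsubst \<sigma> p"
  have etaTT: "\<forall>x\<in>A. eta ar E A x \<in> TT ar E A"
    unfolding eta_def by (auto intro!: cls_TT)
  have wfe: "wf_trm ar (TT ar E A) (tmap (eta ar E A) r1)"
    unfolding tmap_def using r1(1) etaTT by (auto intro!: wf_tsubst)
  have wfs: "wf_trm ar (TT ar E A) s"
    unfolding s_def using p t0 t1 wfe by (intro wf_tsubst[where V="{0,1,2}"]) (auto simp: \<sigma>_def)
  define \<tau> where "\<tau> = cls ar E (TT ar E A) s"
  have tauT: "\<tau> \<in> TT ar E (TT ar E A)" unfolding \<tau>_def by (rule cls_TT[OF wfs])
  have mu1: "mu ar E A \<tau> = cls ar E A (tsubst (tsubst ch \<circ> \<sigma>) p)"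
    using mu_cls[OF th wfs] unfolding \<tau>_def ch_def by (simp add: s_def tsubst_tsubst)
  define \<rho>0 where "\<rho>0 = (\<lambda>i::nat. if i = 0 then r0 else r1)"
  have c0: "eqv ar E A (ch t0) r0" using ch_cls[OF r0(1), of E] r0(2) unfolding ch_def
    by (auto intro: eqv.sym)
  have c1: "eqv ar E A (ch t1) r1" using ch_cls[OF r1(1), of E] r1(2) unfolding ch_def
    by (auto intro: eqv.sym)
  have c2: "eqv ar E A (tsubst ch (tmap (eta ar E A) r1)) r1"
  proof -
    have "tsubst ch (tmap (eta ar E A) r1) = tsubst (ch \<circ> eta ar E A) r1"
      unfolding tmap_def tsubst_tsubst by (simp add: comp_def)
    moreover have "eqv ar E A (tsubst (ch \<circ> eta ar E A) r1) (tsubst Var r1)"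
    proof (rule eqv_cong_subst[OF r1(1)], intro ballI)
      fix x assume "x \<in> A"
      then have "wf_trm ar A (Var x)" by simp
      from ch_cls[OF this, of E] show "eqv ar E A ((ch \<circ> eta ar E A) x) (Var x)"
        unfolding ch_def eta_def by (auto intro: eqv.sym)
    qed
    ultimately show ?thesis by (simp add: tsubst_Var)
  qed
  have "eqv ar E A (tsubst (tsubst ch \<circ> \<sigma>) p) (tsubst \<rho>0 p)"
    using c0 c1 c2 by (intro eqv_cong_subst[OF p]) (auto simp: \<sigma>_def \<rho>0_def)
  moreover have "eqv ar E A (tsubst \<rho>0 p) (\<rho>0 0)"
    by (rule malcev_inst[OF m1 p]) (auto simp: \<rho>0_def r0 r1)
  ultimately have "eqv ar E A (tsubst (tsubst ch \<circ> \<sigma>) p) r0"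
    unfolding \<rho>0_def by (auto intro: eqv.trans)
  then have MU: "mu ar E A \<tau> = t0" unfolding mu1 r0(2) by (rule cls_eq)
  have eTT: "\<forall>v\<in>TT ar E A. e v \<in> A" using eA by blast
  have tm1: "Tmap ar E A e \<tau> = cls ar E A (tsubst (tmap e \<circ> \<sigma>) p)"
    using Tmap_cls[OF wfs eTT, of E] unfolding \<tau>_def by (simp add: s_def tmap_def tsubst_tsubst comp_def)
  have ee: "tmap e (tmap (eta ar E A) r1) = r1"
  proof -
    have "tmap e (tmap (eta ar E A) r1) = tsubst (\<lambda>x. Var (e (eta ar E A x))) r1"
      unfolding tmap_def tsubst_tsubst by (simp add: comp_def)
    also have "\<dots> = tsubst Var r1" using eeta by (intro tsubst_cong[OF r1(1)]) auto
    finally show ?thesis by (simp add: tsubst_Var)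
  qed
  define \<delta>1 where "\<delta>1 = (\<lambda>i::nat. if i = 2 then r1 else Var a)"
  define \<rho>1 where "\<rho>1 = (\<lambda>i::nat. if i = 0 then Var a else r1)"
  have "tsubst (tmap e \<circ> \<sigma>) p = tsubst \<delta>1 p"
    using ee et by (intro tsubst_cong[OF p]) (auto simp: \<sigma>_def \<delta>1_def tmap_def a_def)
  moreover have "eqv ar E A (tsubst \<delta>1 p) (\<rho>1 1)"
    by (rule malcev_inst[OF m2 p]) (auto simp: \<rho>1_def \<delta>1_def r1 aA)
  ultimately have "eqv ar E A (tsubst (tmap e \<circ> \<sigma>) p) r1" by (simp add: \<rho>1_def)
  then have TM: "Tmap ar E A e \<tau> = t1" unfolding tm1 r1(2) by (rule cls_eq)
  show "\<exists>\<tau>\<in>TT ar E (TT ar E A). mu ar E A \<tau> = t0 \<and> Tmap ar E A e \<tau> = t1"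
    using tauT MU TM by blast
qed

theorem corollary3p12:
  fixes ar :: "'f \<Rightarrow> nat" and E :: "(('f, nat) trm \<times> ('f, nat) trm) set"
    and A :: "'a set" and e :: "('f, 'a) trm set \<Rightarrow> 'a"
  assumes "eq_theory ar E"
    and "malcev_theory ar E"
    and "T_algebra ar E A e"
  shows "indiscrete ar E A e \<and> equiv (TT ar E A) (partial_eval ar E A e)"
proof -
  have I: "indiscrete ar E A e" by (rule indisc[OF assms])
  have eA: "e \<in> TT ar E A \<rightarrow> A"
    and law: "\<forall>X\<in>TT ar E (TT ar E A). e (mu ar E A X) = e (Tmap ar E A e X)"
    using assms(3) unfolding T_algebra_def by auto
  have cl: "mu ar E A \<tau> \<in> TT ar E A \<and> Tmap ar E A e \<tau> \<in> TT ar E A"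
    if t: "\<tau> \<in> TT ar E (TT ar E A)" for \<tau>
  proof -
    obtain s where s: "wf_trm ar (TT ar E A) s" "\<tau> = cls ar E (TT ar E A) s"
      using t unfolding TT_def by blast
    have eTT: "\<forall>v\<in>TT ar E A. e v \<in> A" using eA by blast
    have "wf_trm ar A (tsubst (\<lambda>c. SOME t. t \<in> c) s)"
      using s(1) ch_wf[OF assms(1)] by (intro wf_tsubst) auto
    moreover have "wf_trm ar A (tmap e s)"
      unfolding tmap_def using s(1) eTT by (intro wf_tsubst) auto
    ultimately show ?thesis
      using mu_cls[OF assms(1) s(1)] Tmap_cls[OF s(1) eTT, of E] s(2) by (simp add: cls_TT)
  qed
  have PE: "partial_eval ar E A e = {(x, y). x \<in> TT ar E A \<and> y \<in> TT ar E A \<and> e x = e y}"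
  proof (intro set_eqI iffI)
    fix z assume "z \<in> partial_eval ar E A e"
    then obtain \<tau> where "\<tau> \<in> TT ar E (TT ar E A)" "z = (mu ar E A \<tau>, Tmap ar E A e \<tau>)"
      unfolding partial_eval_def by blast
    then show "z \<in> {(x, y). x \<in> TT ar E A \<and> y \<in> TT ar E A \<and> e x = e y}"
      using cl law by auto
  next
    fix z assume "z \<in> {(x, y). x \<in> TT ar E A \<and> y \<in> TT ar E A \<and> e x = e y}"
    then obtain x y where "z = (x, y)" "x \<in> TT ar E A" "y \<in> TT ar E A" "e x = e y" by blast
    then show "z \<in> partial_eval ar E A e"
      using I unfolding indiscrete_def partial_eval_def by blast
  qed
  have "equiv (TT ar E A) (partial_eval ar E A e)"
    unfolding PE by (rule equivI) (auto simp: refl_on_def sym_def trans_def)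
  with I show ?thesis by blast
qed

end
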